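(* Let $K\in\mathcal{U}C_b^3(\mathbb{R}^d,\mathbb{R}^{d\times d})$ and define, for $\xi\in\mathcal{M}$, $B(\xi)=K\ast\xi$. Then $B$ maps $\mathcal{M}$ continuously into $C_b^2(\mathbb{R}^d,\mathbb{R}^d)$ (continuity with respect to the metric $d$ on $\mathcal{M}$), and there is a constant $C_B>0$ such that for all $\xi,\xi'\in\mathcal{M}$: (B1) $\|B(\xi)\|_{C_b^2}\le C_B(\|\xi\|+1)$; (B2) $\|B(\xi)-B(\xi')\|_\infty\le C_B\|\xi-\xi'\|$; (B3) $\|DB(\xi)-DB(\xi')\|_\infty\le C_B\|\xi-\xi'\|$, where $DB(\xi)$ denotes the spatial derivative of the vector field $B(\xi)$.
   Context: $C_b^k(\mathbb{R}^d,\mathbb{R}^m)$ is the space of $C^k$ functions bounded together with all derivatives up to order $k$ (with norm $\|\cdot\|_{C^k_b}$ the sum of the sup norms of these derivatives); $\mathcal{U}C_b^3(\mathbb{R}^d,\mathbb{R}^m)$ is the subset of $C_b^3$ of those $f$ with $f$, $Df$, $D^2f$ uniformly continuous. $\mathcal{M}$ is the dual space of $C_b(\mathbb{R}^d;\mathbb{R}^d)$ (bounded continuous vector fields with sup norm $\|\cdot\|_\infty$), with dual norm $|\xi|_{\mathcal{M}}=\sup_{\|\theta\|_\infty\le 1}|\xi(\theta)|$. The weak norm is $\|\xi\|=\sup\{\xi(\theta):\|\theta\|_\infty+\mathrm{Lip}(\theta)\le 1\}$, $\mathrm{Lip}(\theta)$ the Lipschitz constant, and $d(\xi,\xi')=\|\xi-\xi'\|$.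 For $\xi\in\mathcal{M}$ and continuous bounded $K:\mathbb{R}^d\to\mathbb{R}^{d\times d}$, $K\ast\xi$ is the vector field with components $(K\ast\xi)_i(x)=\xi(K_{i\cdot}(x-\cdot))$, where $K_{i\cdot}(z)=(K_{ij}(z))_{j=1,\dots,d}$. *)

theory Defs
  imports "HOL-Analysis.Analysis"
begin

text \<open>The space M: dual of the Banach space of bounded continuous vector fields on R^d.\<close>
type_synonym 'd meas = "((real^'d) \<Rightarrow>\<^sub>C (real^'d)) \<Rightarrow>\<^sub>L real"

definition weak_norm :: "'d::finite meas \<Rightarrow> real" where
  "weak_norm \<xi> = (SUP \<theta> \<in> {\<theta>. \<exists>L. lipschitz_on L UNIV (apply_bcontfun \<theta>) \<and> norm \<theta> + L \<le> 1}.
                     blinfun_apply \<xi> \<theta>)"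

definition conv :: "(real^'d \<Rightarrow> real^'d^'d) \<Rightarrow> 'd::finite meas \<Rightarrow> real^'d \<Rightarrow> real^'d" where
  "conv K \<xi> x = (\<chi> i. blinfun_apply \<xi> (Bcontfun (\<lambda>z. K (x - z) $ i)))"

definition sup_norm :: "('a \<Rightarrow> 'b::real_normed_vector) \<Rightarrow> real" where
  "sup_norm f = (SUP x. norm (f x))"

definition Cb2_derivs :: "('a::euclidean_space \<Rightarrow> 'b::euclidean_space) \<Rightarrow> ('a \<Rightarrow> ('a \<Rightarrow>\<^sub>L 'b))
     \<Rightarrow> ('a \<Rightarrow> ('a \<Rightarrow>\<^sub>L ('a \<Rightarrow>\<^sub>L 'b))) \<Rightarrow> bool" where
  "Cb2_derivs f D1 D2 \<longleftrightarrow>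
     (\<forall>x. (f has_derivative blinfun_apply (D1 x)) (at x)) \<and>
     (\<forall>x. (D1 has_derivative blinfun_apply (D2 x)) (at x)) \<and>
     continuous_on UNIV D2 \<and>
     bounded (range f) \<and> bounded (range D1) \<and> bounded (range D2)"

definition Cb2_norm :: "('a \<Rightarrow> 'b::real_normed_vector) \<Rightarrow> ('a \<Rightarrow> 'c::real_normed_vector)
     \<Rightarrow> ('a \<Rightarrow> 'e::real_normed_vector) \<Rightarrow> real" where
  "Cb2_norm f D1 D2 = sup_norm f + sup_norm D1 + sup_norm D2"

definition UCb3 :: "('a::euclidean_space \<Rightarrow> 'b::euclidean_space) \<Rightarrow> bool" where
  "UCb3 f \<longleftrightarrow> (\<exists>(D1::'a \<Rightarrow> ('a \<Rightarrow>\<^sub>L 'b)) (D2::'a \<Rightarrow> ('a \<Rightarrow>\<^sub>L ('a \<Rightarrow>\<^sub>L 'b)))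
       (D3::'a \<Rightarrow> ('a \<Rightarrow>\<^sub>L ('a \<Rightarrow>\<^sub>L ('a \<Rightarrow>\<^sub>L 'b)))).
     (\<forall>x. (f has_derivative blinfun_apply (D1 x)) (at x)) \<and>
     (\<forall>x. (D1 has_derivative blinfun_apply (D2 x)) (at x)) \<and>
     (\<forall>x. (D2 has_derivative blinfun_apply (D3 x)) (at x)) \<and>
     continuous_on UNIV D3 \<and>
     bounded (range f) \<and> bounded (range D1) \<and> bounded (range D2) \<and> bounded (range D3) \<and>
     uniformly_continuous_on UNIV f \<and> uniformly_continuous_on UNIV D1 \<and>
     uniformly_continuous_on UNIV D2)"

end

theory Submission
  imports Defs
begin


lemma my_nth_le: "norm ((x::'a::real_normed_vector^'n) $ i) \<le> norm x"
  unfolding norm_vec_def by (rule member_le_L2_set) auto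

definition Ap :: "'d::finite meas \<Rightarrow> (real^'d \<Rightarrow> real^'d^'d) \<Rightarrow> real^'d" where
  "Ap \<xi> g = (\<chi> i. blinfun_apply \<xi> (Bcontfun (\<lambda>z. g z $ i)))"

definition bc :: "('a::topological_space \<Rightarrow> 'b::real_normed_vector) \<Rightarrow> bool" where
  "bc g \<longleftrightarrow> continuous_on UNIV g \<and> (\<exists>M. \<forall>z. norm (g z) \<le> M)"

lemma bc_row:
  fixes g :: "real^'d::finite \<Rightarrow> real^'d^'d"
  assumes "bc g" shows "(\<lambda>z. g z $ i) \<in> bcontfun"
proof -
  from assms obtain M where M: "\<And>z. norm (g z) \<le> M" and c: "continuous_on UNIV g" by (auto simp: bc_def)
  show ?thesis
    apply (rule bcontfun_normI[where b=M])
     apply (intro continuous_intros c)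
    using M my_nth_le order_trans by blast
qed

lemma bc_diff: "bc f \<Longrightarrow> bc g \<Longrightarrow> bc (\<lambda>z. f z - g z)"
  unfolding bc_def
  apply (auto intro!: continuous_intros)
  subgoal for M N by (rule exI[of _ "M+N"]) (metis add_mono norm_triangle_ineq4 order_trans)
  done

lemma bc_add: "bc f \<Longrightarrow> bc g \<Longrightarrow> bc (\<lambda>z. f z + g z)"
  unfolding bc_def
  apply (auto intro!: continuous_intros)
  subgoal for M N by (rule exI[of _ "M+N"]) (metis add_mono norm_triangle_ineq order_trans)
  done

lemma bc_scale: "bc f \<Longrightarrow> bc (\<lambda>z. c *\<^sub>R f z)"
  unfolding bc_def
  apply (auto intro!: continuous_intros)
  subgoal for M by (rule exI[of _ "\<bar>c\<bar>*M"]) (simp add: mult_left_mono)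
  done

lemma Ap_add:
  assumes "bc f" "bc g"
  shows "Ap \<xi> (\<lambda>z. f z + g z) = Ap \<xi> f + Ap \<xi> g"
proof -
  have "Bcontfun (\<lambda>z. (f z + g z) $ i) = Bcontfun (\<lambda>z. f z $ i) + Bcontfun (\<lambda>z. g z $ i)" for i
  proof -
    have m: "(\<lambda>z. f z $ i + g z $ i) \<in> bcontfun" using bc_row[OF bc_add[OF assms]] by simp
    show ?thesis by (rule bcontfun_eqI) (simp add: Bcontfun_inverse[OF m] Bcontfun_inverse bc_row assms)
  qed
  then show ?thesis by (simp add: Ap_def vec_eq_iff blinfun.add_right)
qed

lemma Ap_diff:
  assumes "bc f" "bc g"
  shows "Ap \<xi> (\<lambda>z. f z - g z) = Ap \<xi> f - Ap \<xi> g"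
proof -
  have "Bcontfun (\<lambda>z. (f z - g z) $ i) = Bcontfun (\<lambda>z. f z $ i) - Bcontfun (\<lambda>z. g z $ i)" for i
  proof -
    have m: "(\<lambda>z. f z $ i - g z $ i) \<in> bcontfun" using bc_row[OF bc_diff[OF assms]] by simp
    show ?thesis by (rule bcontfun_eqI) (simp add: Bcontfun_inverse[OF m] Bcontfun_inverse bc_row assms)
  qed
  then show ?thesis by (simp add: Ap_def vec_eq_iff blinfun.diff_right)
qed

lemma Ap_scale:
  assumes "bc f"
  shows "Ap \<xi> (\<lambda>z. c *\<^sub>R f z) = c *\<^sub>R Ap \<xi> f"
proof -
  have "Bcontfun (\<lambda>z. (c *\<^sub>R f z) $ i) = c *\<^sub>R Bcontfun (\<lambda>z. f z $ i)" for i
  proof -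
    have m: "(\<lambda>z. c *\<^sub>R f z $ i) \<in> bcontfun" using bc_row[OF bc_scale[OF assms]] by simp
    show ?thesis by (rule bcontfun_eqI) (simp add: Bcontfun_inverse[OF m] Bcontfun_inverse bc_row assms)
  qed
  then show ?thesis by (simp add: Ap_def vec_eq_iff blinfun.scaleR_right)
qed

lemma Ap_xi_diff: "Ap (\<xi> - \<xi>') g = Ap \<xi> g - Ap \<xi>' g"
  by (simp add: Ap_def vec_eq_iff blinfun.diff_left)

lemma Ap_norm:
  fixes g :: "real^'d::finite \<Rightarrow> real^'d^'d"
  assumes "bc g" "\<And>z. norm (g z) \<le> M"
  shows "norm (Ap \<xi> g) \<le> CARD('d) * (norm \<xi> * M)"
proof -
  have "\<bar>Ap \<xi> g $ i\<bar> \<le> norm \<xi> * M" for i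
  proof -
    have "norm (Bcontfun (\<lambda>z. g z $ i)) \<le> M"
    proof (rule norm_bound)
      fix x
      have "apply_bcontfun (Bcontfun (\<lambda>z. g z $ i)) = (\<lambda>z. g z $ i)"
        by (rule Bcontfun_inverse[OF bc_row[OF assms(1)]])
      then show "norm (apply_bcontfun (Bcontfun (\<lambda>z. g z $ i)) x) \<le> M"
        using order_trans[OF my_nth_le[of "g x" i] assms(2)[of x]] by simp
    qed
    then have "norm \<xi> * norm (Bcontfun (\<lambda>z. g z $ i)) \<le> norm \<xi> * M"
      by (rule mult_left_mono) simp
    moreover have "\<bar>blinfun_apply \<xi> (Bcontfun (\<lambda>z. g z $ i))\<bar> \<le> norm \<xi> * norm (Bcontfun (\<lambda>z. g z $ i))"
      using norm_blinfun[of \<xi> "Bcontfun (\<lambda>z. g z $ i)"] by simp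
    ultimately show ?thesis unfolding Ap_def by simp
  qed
  then have "(\<Sum>i\<in>UNIV. \<bar>Ap \<xi> g $ i\<bar>) \<le> (\<Sum>i\<in>(UNIV::'d set). norm \<xi> * M)"
    by (intro sum_mono) auto
  then show ?thesis using norm_le_l1_cart[of "Ap \<xi> g"] by simp
qed



lemma row_apply:
  fixes g :: "real^'d::finite \<Rightarrow> real^'d^'d"
  assumes "bc g" shows "apply_bcontfun (Bcontfun (\<lambda>z. g z $ i)) = (\<lambda>z. g z $ i)"
  by (rule Bcontfun_inverse[OF bc_row[OF assms]])

lemma row_norm:
  fixes g :: "real^'d::finite \<Rightarrow> real^'d^'d"
  assumes "bc g" "\<And>z. norm (g z) \<le> M"
  shows "norm (Bcontfun (\<lambda>z. g z $ i)) \<le> M"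
proof (rule norm_bound)
  fix x
  show "norm (apply_bcontfun (Bcontfun (\<lambda>z. g z $ i)) x) \<le> M"
    using order_trans[OF my_nth_le[of "g x" i] assms(2)[of x]] row_apply[OF assms(1)] by simp
qed

lemma row_lip:
  fixes g :: "real^'d::finite \<Rightarrow> real^'d^'d"
  assumes "bc g" "\<And>z z'. norm (g z - g z') \<le> L * norm (z - z')" "0 \<le> L"
  shows "lipschitz_on L UNIV (apply_bcontfun (Bcontfun (\<lambda>z. g z $ i)))"
  unfolding lipschitz_on_def row_apply[OF assms(1)]
proof (intro conjI assms(3) ballI)
  fix x y :: "real^'d"
  have "dist (g x $ i) (g y $ i) = norm ((g x - g y) $ i)" by (simp add: dist_norm)
  also have "\<dots> \<le> norm (g x - g y)" by (rule my_nth_le)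
  also have "\<dots> \<le> L * dist x y" using assms(2) by (simp add: dist_norm)
  finally show "dist (g x $ i) (g y $ i) \<le> L * dist x y" .
qed


lemma wn_bdd:
  fixes \<xi> :: "'d::finite meas"
  shows "bdd_above (blinfun_apply \<xi> ` {\<theta>. \<exists>L. lipschitz_on L UNIV (apply_bcontfun \<theta>) \<and> norm \<theta> + L \<le> 1})"
proof (rule bdd_aboveI2[where M="norm \<xi>"])
  fix \<theta> :: "(real^'d) \<Rightarrow>\<^sub>C (real^'d)"
  assume "\<theta> \<in> {\<theta>. \<exists>L. lipschitz_on L UNIV (apply_bcontfun \<theta>) \<and> norm \<theta> + L \<le> 1}"
  then obtain L where "lipschitz_on L UNIV (apply_bcontfun \<theta>)" "norm \<theta> + L \<le> 1" by auto
  then have n: "norm \<theta> \<le> 1" by (auto simp: lipschitz_on_def)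
  have "blinfun_apply \<xi> \<theta> \<le> norm \<xi> * norm \<theta>"
    using norm_blinfun[of \<xi> \<theta>] by simp
  also have "\<dots> \<le> norm \<xi>" using n mult_left_mono[OF n, of "norm \<xi>"] by simp
  finally show "blinfun_apply \<xi> \<theta> \<le> norm \<xi>" .
qed

lemma wn_upper:
  fixes \<xi> :: "'d::finite meas"
  assumes "lipschitz_on L UNIV (apply_bcontfun \<theta>)" "norm \<theta> + L \<le> 1"
  shows "blinfun_apply \<xi> \<theta> \<le> weak_norm \<xi>"
  unfolding weak_norm_def
  by (rule cSUP_upper[OF _ wn_bdd]) (use assms in auto)

lemma wn_nonneg: "0 \<le> weak_norm (\<xi> :: 'd::finite meas)"
  using wn_upper[of 0 0 \<xi>] by (simp add: lipschitz_on_def)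

lemma wn_abs:
  fixes \<xi> :: "'d::finite meas"
  assumes "lipschitz_on L UNIV (apply_bcontfun \<theta>)" "norm \<theta> + L \<le> c" "0 < c"
  shows "\<bar>blinfun_apply \<xi> \<theta>\<bar> \<le> c * weak_norm \<xi>"
proof -
  have L0: "0 \<le> L" using assms(1) by (simp add: lipschitz_on_def)
  have key: "blinfun_apply \<xi> (a *\<^sub>R \<theta>) \<le> weak_norm \<xi>" if "\<bar>a\<bar> = 1 / c" for a
  proof (rule wn_upper[where L="L / c"])
    show "lipschitz_on (L / c) UNIV (apply_bcontfun (a *\<^sub>R \<theta>))"
      unfolding lipschitz_on_def
    proof (intro conjI ballI)
      show "0 \<le> L / c" using L0 assms(3) by simp
      fix x y :: "real^'d"
      have "dist (apply_bcontfun (a *\<^sub>R \<theta>) x) (apply_bcontfun (a *\<^sub>R \<theta>) y)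
            = \<bar>a\<bar> * dist (\<theta> x) (\<theta> y)"
        by (simp add: dist_norm scaleR_diff_right[symmetric])
      also have "\<dots> \<le> \<bar>a\<bar> * (L * dist x y)"
        using assms(1) by (intro mult_left_mono) (auto simp: lipschitz_on_def)
      finally show "dist (apply_bcontfun (a *\<^sub>R \<theta>) x) (apply_bcontfun (a *\<^sub>R \<theta>) y) \<le> L / c * dist x y"
        using that by simp
    qed
    have "norm (a *\<^sub>R \<theta>) + L / c = (norm \<theta> + L) / c" using that by (simp add: add_divide_distrib)
    also have "\<dots> \<le> 1" using assms(2,3) by simp
    finally show "norm (a *\<^sub>R \<theta>) + L / c \<le> 1" .
  qed
  have h1: "blinfun_apply \<xi> \<theta> / c \<le> weak_norm \<xi>" using key[of "1/c"] assms(3)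
    by (simp add: blinfun.scaleR_right)
  have h2: "- (blinfun_apply \<xi> \<theta> / c) \<le> weak_norm \<xi>" using key[of "-1/c"] assms(3)
    by (simp add: blinfun.scaleR_right blinfun.minus_right)
  have a: "blinfun_apply \<xi> \<theta> \<le> c * weak_norm \<xi>" using mult_left_mono[OF h1, of c] assms(3) by simp
  have b: "- blinfun_apply \<xi> \<theta> \<le> c * weak_norm \<xi>" using mult_left_mono[OF h2, of c] assms(3) by simp
  show ?thesis using a b by (simp add: abs_le_iff)
qed

lemma Ap_weak:
  fixes g :: "real^'d::finite \<Rightarrow> real^'d^'d"
  assumes "bc g" "\<And>z. norm (g z) \<le> M" "\<And>z z'. norm (g z - g z') \<le> L * norm (z - z')" "0 \<le> L"
  shows "norm (Ap \<xi> g) \<le> CARD('d) * ((M + L) * weak_norm \<xi>)"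
proof -
  have M0: "0 \<le> M" using assms(2)[of 0] norm_ge_zero order_trans by blast
  have "\<bar>Ap \<xi> g $ i\<bar> \<le> (M + L) * weak_norm \<xi>" for i
  proof -
    have n: "norm (Bcontfun (\<lambda>z. g z $ i)) \<le> M" by (rule row_norm[OF assms(1,2)])
    have l: "lipschitz_on L UNIV (apply_bcontfun (Bcontfun (\<lambda>z. g z $ i)))" by (rule row_lip[OF assms(1,3,4)])
    show ?thesis
    proof (cases "0 < M + L")
      case True
      then show ?thesis unfolding Ap_def using wn_abs[OF l _ True, of \<xi>] n by simp
    next
      case False
      then have "M = 0" using M0 assms(4) by simp
      then have "norm (Bcontfun (\<lambda>z. g z $ i)) = 0" using n by simp
      then have "Bcontfun (\<lambda>z. g z $ i) = 0" by simp
      then show ?thesis unfolding Ap_def using False M0 assms(4) \<open>M = 0\<close> by (simp add: wn_nonneg)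
    qed
  qed
  then have "(\<Sum>i\<in>UNIV. \<bar>Ap \<xi> g $ i\<bar>) \<le> (\<Sum>i\<in>(UNIV::'d set). (M + L) * weak_norm \<xi>)"
    by (intro sum_mono) auto
  then show ?thesis using norm_le_l1_cart[of "Ap \<xi> g"] by simp
qed



lemma bc_app: "bc \<Phi> \<Longrightarrow> bc (\<lambda>z. blinfun_apply (\<Phi> z) h)"
  unfolding bc_def
proof (elim conjE exE, intro conjI)
  fix M assume c: "continuous_on UNIV \<Phi>" and M: "\<forall>z. norm (\<Phi> z) \<le> M"
  show "continuous_on UNIV (\<lambda>z. blinfun_apply (\<Phi> z) h)"
    by (rule blinfun.continuous_on[OF c continuous_on_const])
  show "\<exists>M. \<forall>z. norm (blinfun_apply (\<Phi> z) h) \<le> M"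
    by (rule exI[of _ "M * norm h"]) (meson M norm_blinfun mult_right_mono norm_ge_zero order_trans)
qed

lemma bc_bound: "bc \<Phi> \<Longrightarrow> \<exists>M\<ge>0. \<forall>z. norm (\<Phi> z) \<le> M"
  unfolding bc_def by (meson norm_ge_zero order_trans)

definition AL :: "'d::finite meas \<Rightarrow> (real^'d \<Rightarrow> ((real^'d) \<Rightarrow>\<^sub>L (real^'d^'d))) \<Rightarrow> ((real^'d) \<Rightarrow>\<^sub>L (real^'d))" where
  "AL \<xi> \<Phi> = Blinfun (\<lambda>h. Ap \<xi> (\<lambda>z. \<Phi> z h))"

lemma AL_apply:
  fixes \<Phi> :: "real^'d::finite \<Rightarrow> ((real^'d) \<Rightarrow>\<^sub>L (real^'d^'d))"
  assumes "bc \<Phi>" shows "blinfun_apply (AL \<xi> \<Phi>) = (\<lambda>h. Ap \<xi> (\<lambda>z. \<Phi> z h))"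
proof -
  obtain M where M0: "0 \<le> M" and M: "\<And>z. norm (\<Phi> z) \<le> M" using bc_bound[OF assms] by auto
  have "bounded_linear (\<lambda>h. Ap \<xi> (\<lambda>z. \<Phi> z h))"
  proof (rule bounded_linear_intro[where K="real CARD('d) * (norm \<xi> * M)"])
    fix x y :: "real^'d"
    show "Ap \<xi> (\<lambda>z. \<Phi> z (x + y)) = Ap \<xi> (\<lambda>z. \<Phi> z x) + Ap \<xi> (\<lambda>z. \<Phi> z y)"
      by (simp add: blinfun.add_right Ap_add bc_app assms)
  next
    fix r and x :: "real^'d"
    show "Ap \<xi> (\<lambda>z. \<Phi> z (r *\<^sub>R x)) = r *\<^sub>R Ap \<xi> (\<lambda>z. \<Phi> z x)"
      by (simp add: blinfun.scaleR_right Ap_scale bc_app assms)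
  next
    fix x :: "real^'d"
    have "norm (Ap \<xi> (\<lambda>z. \<Phi> z x)) \<le> real CARD('d) * (norm \<xi> * (M * norm x))"
      by (rule Ap_norm[OF bc_app[OF assms]]) (meson M norm_blinfun mult_right_mono norm_ge_zero order_trans)
    then show "norm (Ap \<xi> (\<lambda>z. \<Phi> z x)) \<le> norm x * (real CARD('d) * (norm \<xi> * M))"
      by (simp add: algebra_simps)
  qed
  then show ?thesis unfolding AL_def by (rule bounded_linear_Blinfun_apply)
qed

lemma AL_norm:
  fixes \<Phi> :: "real^'d::finite \<Rightarrow> ((real^'d) \<Rightarrow>\<^sub>L (real^'d^'d))"
  assumes "bc \<Phi>" "\<And>z. norm (\<Phi> z) \<le> M"
  shows "norm (AL \<xi> \<Phi>) \<le> real CARD('d) * (norm \<xi> * M)"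
proof (rule norm_blinfun_bound)
  have "0 \<le> M" using assms(2)[of 0] norm_ge_zero order_trans by blast
  then show "0 \<le> real CARD('d) * (norm \<xi> * M)" by simp
  fix h :: "real^'d"
  have "norm (Ap \<xi> (\<lambda>z. \<Phi> z h)) \<le> real CARD('d) * (norm \<xi> * (M * norm h))"
    by (rule Ap_norm[OF bc_app[OF assms(1)]]) (meson assms(2) norm_blinfun mult_right_mono norm_ge_zero order_trans)
  then show "norm (blinfun_apply (AL \<xi> \<Phi>) h) \<le> real CARD('d) * (norm \<xi> * M) * norm h"
    by (simp add: AL_apply[OF assms(1)] algebra_simps)
qed

lemma AL_weak:
  fixes \<Phi> :: "real^'d::finite \<Rightarrow> ((real^'d) \<Rightarrow>\<^sub>L (real^'d^'d))"
  assumes "bc \<Phi>" "\<And>z. norm (\<Phi> z) \<le> M" "\<And>z z'. norm (\<Phi> z - \<Phi> z') \<le> L * norm (z - z')" "0 \<le> L"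
  shows "norm (AL \<xi> \<Phi>) \<le> real CARD('d) * ((M + L) * weak_norm \<xi>)"
proof (rule norm_blinfun_bound)
  have "0 \<le> M" using assms(2)[of 0] norm_ge_zero order_trans by blast
  then show "0 \<le> real CARD('d) * ((M + L) * weak_norm \<xi>)" using assms(4) wn_nonneg by (intro mult_nonneg_nonneg) auto
  fix h :: "real^'d"
  have "norm (Ap \<xi> (\<lambda>z. \<Phi> z h)) \<le> real CARD('d) * ((M * norm h + L * norm h) * weak_norm \<xi>)"
  proof (rule Ap_weak[OF bc_app[OF assms(1)]])
    show "norm (\<Phi> z h) \<le> M * norm h" for z
      by (meson assms(2) norm_blinfun mult_right_mono norm_ge_zero order_trans)
    show "norm (\<Phi> z h - \<Phi> z' h) \<le> L * norm h * norm (z - z')" for z z'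
    proof -
      have "norm (\<Phi> z h - \<Phi> z' h) = norm ((\<Phi> z - \<Phi> z') h)" by (simp add: blinfun.diff_left)
      also have "\<dots> \<le> norm (\<Phi> z - \<Phi> z') * norm h" by (rule norm_blinfun)
      also have "\<dots> \<le> L * norm (z - z') * norm h" by (rule mult_right_mono[OF assms(3)]) simp
      finally show ?thesis by (simp add: algebra_simps)
    qed
    show "0 \<le> L * norm h" using assms(4) by simp
  qed
  then show "norm (blinfun_apply (AL \<xi> \<Phi>) h) \<le> real CARD('d) * ((M + L) * weak_norm \<xi>) * norm h"
    by (simp add: AL_apply[OF assms(1)] algebra_simps)
qed

lemma AL_diff:
  fixes \<Phi> :: "real^'d::finite \<Rightarrow> ((real^'d) \<Rightarrow>\<^sub>L (real^'d^'d))"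
  assumes "bc \<Phi>" "bc \<Psi>"
  shows "AL \<xi> (\<lambda>z. \<Phi> z - \<Psi> z) = AL \<xi> \<Phi> - AL \<xi> \<Psi>"
  by (rule blinfun_eqI) (simp add: AL_apply assms bc_diff blinfun.diff_left Ap_diff bc_app)

lemma AL_add:
  fixes \<Phi> :: "real^'d::finite \<Rightarrow> ((real^'d) \<Rightarrow>\<^sub>L (real^'d^'d))"
  assumes "bc \<Phi>" "bc \<Psi>"
  shows "AL \<xi> (\<lambda>z. \<Phi> z + \<Psi> z) = AL \<xi> \<Phi> + AL \<xi> \<Psi>"
  by (rule blinfun_eqI) (simp add: AL_apply assms bc_add blinfun.add_left Ap_add bc_app)

lemma AL_scale:
  fixes \<Phi> :: "real^'d::finite \<Rightarrow> ((real^'d) \<Rightarrow>\<^sub>L (real^'d^'d))"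
  assumes "bc \<Phi>"
  shows "AL \<xi> (\<lambda>z. c *\<^sub>R \<Phi> z) = c *\<^sub>R AL \<xi> \<Phi>"
  by (rule blinfun_eqI) (simp add: AL_apply assms bc_scale blinfun.scaleR_left Ap_scale bc_app)

lemma AL_xi_diff:
  fixes \<Phi> :: "real^'d::finite \<Rightarrow> ((real^'d) \<Rightarrow>\<^sub>L (real^'d^'d))"
  assumes "bc \<Phi>"
  shows "AL (\<xi> - \<xi>') \<Phi> = AL \<xi> \<Phi> - AL \<xi>' \<Phi>"
  by (rule blinfun_eqI) (simp add: AL_apply assms blinfun.diff_left Ap_xi_diff)



definition AL2 :: "'d::finite meas \<Rightarrow> (real^'d \<Rightarrow> ((real^'d) \<Rightarrow>\<^sub>L ((real^'d) \<Rightarrow>\<^sub>L (real^'d^'d))))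
   \<Rightarrow> ((real^'d) \<Rightarrow>\<^sub>L ((real^'d) \<Rightarrow>\<^sub>L (real^'d)))" where
  "AL2 \<xi> \<Psi> = Blinfun (\<lambda>h. AL \<xi> (\<lambda>z. \<Psi> z h))"

lemma AL2_apply:
  fixes \<Psi> :: "real^'d::finite \<Rightarrow> ((real^'d) \<Rightarrow>\<^sub>L ((real^'d) \<Rightarrow>\<^sub>L (real^'d^'d)))"
  assumes "bc \<Psi>" shows "blinfun_apply (AL2 \<xi> \<Psi>) = (\<lambda>h. AL \<xi> (\<lambda>z. \<Psi> z h))"
proof -
  obtain M where M0: "0 \<le> M" and M: "\<And>z. norm (\<Psi> z) \<le> M" using bc_bound[OF assms] by auto
  have "bounded_linear (\<lambda>h. AL \<xi> (\<lambda>z. \<Psi> z h))"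
  proof (rule bounded_linear_intro[where K="real CARD('d) * (norm \<xi> * M)"])
    fix x y :: "real^'d"
    show "AL \<xi> (\<lambda>z. \<Psi> z (x + y)) = AL \<xi> (\<lambda>z. \<Psi> z x) + AL \<xi> (\<lambda>z. \<Psi> z y)"
      by (simp add: blinfun.add_right AL_add bc_app assms)
  next
    fix r and x :: "real^'d"
    show "AL \<xi> (\<lambda>z. \<Psi> z (r *\<^sub>R x)) = r *\<^sub>R AL \<xi> (\<lambda>z. \<Psi> z x)"
      by (simp add: blinfun.scaleR_right AL_scale bc_app assms)
  next
    fix x :: "real^'d"
    have "norm (AL \<xi> (\<lambda>z. \<Psi> z x)) \<le> real CARD('d) * (norm \<xi> * (M * norm x))"
      by (rule AL_norm[OF bc_app[OF assms]]) (meson M norm_blinfun mult_right_mono norm_ge_zero order_trans)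
    then show "norm (AL \<xi> (\<lambda>z. \<Psi> z x)) \<le> norm x * (real CARD('d) * (norm \<xi> * M))"
      by (simp add: algebra_simps)
  qed
  then show ?thesis unfolding AL2_def by (rule bounded_linear_Blinfun_apply)
qed

lemma AL2_norm:
  fixes \<Psi> :: "real^'d::finite \<Rightarrow> ((real^'d) \<Rightarrow>\<^sub>L ((real^'d) \<Rightarrow>\<^sub>L (real^'d^'d)))"
  assumes "bc \<Psi>" "\<And>z. norm (\<Psi> z) \<le> M"
  shows "norm (AL2 \<xi> \<Psi>) \<le> real CARD('d) * (norm \<xi> * M)"
proof (rule norm_blinfun_bound)
  have "0 \<le> M" using assms(2)[of 0] norm_ge_zero order_trans by blast
  then show "0 \<le> real CARD('d) * (norm \<xi> * M)" by simp
  fix h :: "real^'d"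
  have "norm (AL \<xi> (\<lambda>z. \<Psi> z h)) \<le> real CARD('d) * (norm \<xi> * (M * norm h))"
    by (rule AL_norm[OF bc_app[OF assms(1)]]) (meson assms(2) norm_blinfun mult_right_mono norm_ge_zero order_trans)
  then show "norm (blinfun_apply (AL2 \<xi> \<Psi>) h) \<le> real CARD('d) * (norm \<xi> * M) * norm h"
    by (simp add: AL2_apply[OF assms(1)] algebra_simps)
qed

lemma AL2_weak:
  fixes \<Psi> :: "real^'d::finite \<Rightarrow> ((real^'d) \<Rightarrow>\<^sub>L ((real^'d) \<Rightarrow>\<^sub>L (real^'d^'d)))"
  assumes "bc \<Psi>" "\<And>z. norm (\<Psi> z) \<le> M" "\<And>z z'. norm (\<Psi> z - \<Psi> z') \<le> L * norm (z - z')" "0 \<le> L"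
  shows "norm (AL2 \<xi> \<Psi>) \<le> real CARD('d) * ((M + L) * weak_norm \<xi>)"
proof (rule norm_blinfun_bound)
  have "0 \<le> M" using assms(2)[of 0] norm_ge_zero order_trans by blast
  then show "0 \<le> real CARD('d) * ((M + L) * weak_norm \<xi>)" using assms(4) wn_nonneg by (intro mult_nonneg_nonneg) auto
  fix h :: "real^'d"
  have "norm (AL \<xi> (\<lambda>z. \<Psi> z h)) \<le> real CARD('d) * ((M * norm h + L * norm h) * weak_norm \<xi>)"
  proof (rule AL_weak[OF bc_app[OF assms(1)]])
    show "norm (\<Psi> z h) \<le> M * norm h" for z
      by (meson assms(2) norm_blinfun mult_right_mono norm_ge_zero order_trans)
    show "norm (\<Psi> z h - \<Psi> z' h) \<le> L * norm h * norm (z - z')" for z z'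
    proof -
      have "norm (\<Psi> z h - \<Psi> z' h) = norm ((\<Psi> z - \<Psi> z') h)" by (simp add: blinfun.diff_left)
      also have "\<dots> \<le> norm (\<Psi> z - \<Psi> z') * norm h" by (rule norm_blinfun)
      also have "\<dots> \<le> L * norm (z - z') * norm h" by (rule mult_right_mono[OF assms(3)]) simp
      finally show ?thesis by (simp add: algebra_simps)
    qed
    show "0 \<le> L * norm h" using assms(4) by simp
  qed
  then show "norm (blinfun_apply (AL2 \<xi> \<Psi>) h) \<le> real CARD('d) * ((M + L) * weak_norm \<xi>) * norm h"
    by (simp add: AL2_apply[OF assms(1)] algebra_simps)
qed

lemma AL2_diff:
  fixes \<Psi> :: "real^'d::finite \<Rightarrow> ((real^'d) \<Rightarrow>\<^sub>L ((real^'d) \<Rightarrow>\<^sub>L (real^'d^'d)))"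
  assumes "bc \<Psi>" "bc \<Phi>"
  shows "AL2 \<xi> (\<lambda>z. \<Psi> z - \<Phi> z) = AL2 \<xi> \<Psi> - AL2 \<xi> \<Phi>"
  by (rule blinfun_eqI) (simp add: AL2_apply assms bc_diff blinfun.diff_left AL_diff bc_app)

lemma AL2_xi_diff:
  fixes \<Psi> :: "real^'d::finite \<Rightarrow> ((real^'d) \<Rightarrow>\<^sub>L ((real^'d) \<Rightarrow>\<^sub>L (real^'d^'d)))"
  assumes "bc \<Psi>"
  shows "AL2 (\<xi> - \<xi>') \<Psi> = AL2 \<xi> \<Psi> - AL2 \<xi>' \<Psi>"
  by (rule blinfun_eqI) (simp add: AL2_apply assms blinfun.diff_left AL_xi_diff bc_app)

lemma unif_lin:
  fixes f :: "'a::euclidean_space \<Rightarrow> 'b::real_normed_vector"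
  assumes der: "\<And>x. (f has_derivative blinfun_apply (D x)) (at x)"
    and uc: "uniformly_continuous_on UNIV D" and e: "e > 0"
  shows "\<exists>d>0. \<forall>w h. norm h < d \<longrightarrow> norm (f (w + h) - f w - D w h) \<le> e * norm h"
proof -
  obtain d where d: "d > 0" and dd: "\<And>x x'. dist x' x < d \<Longrightarrow> dist (D x') (D x) < e"
    using uc e unfolding uniformly_continuous_on_def by blast
  have "norm (f (w + h) - f w - D w h) \<le> e * norm h" if h: "norm h < d" for w h
  proof -
    define g where "g y = f y - D w y" for y
    have gd: "(g has_derivative (\<lambda>v. D y v - D w v)) (at y within closed_segment w (w + h))" for y
      unfolding g_def
      by (rule has_derivative_at_withinI, intro has_derivative_diff der bounded_linear_imp_has_derivative blinfun.bounded_linear_right)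
    have B: "onorm (\<lambda>v. D y v - D w v) \<le> e" if y: "y \<in> closed_segment w (w + h)" for y
    proof -
      have "dist y w \<le> dist w (w + h)" using dist_in_closed_segment[OF y] by simp
      also have "\<dots> = norm h" by (simp add: dist_norm)
      finally have "dist y w < d" using h by simp
      then have "norm (D y - D w) < e" using dd by (simp add: dist_norm)
      moreover have "onorm (\<lambda>v. D y v - D w v) = onorm (blinfun_apply (D y - D w))"
        by (rule arg_cong[where f=onorm]) (rule ext, simp add: blinfun.diff_left)
      moreover have "onorm (blinfun_apply (D y - D w)) = norm (D y - D w)"
        by (rule norm_blinfun.rep_eq[symmetric])
      ultimately show ?thesis by simp
    qed
    have "norm (g (w + h) - g w) \<le> e * norm ((w + h) - w)"
      by (rule differentiable_bound[OF convex_closed_segment gd B]) auto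
    moreover have "g (w + h) - g w = f (w + h) - f w - D w h"
      unfolding g_def by (simp add: blinfun.add_right algebra_simps)
    ultimately show ?thesis by simp
  qed
  with d show ?thesis by blast
qed

lemma lip_from_deriv:
  fixes f :: "'a::euclidean_space \<Rightarrow> 'b::real_normed_vector"
  assumes der: "\<And>x. (f has_derivative blinfun_apply (D x)) (at x)"
    and B: "\<And>x. norm (D x) \<le> B"
  shows "norm (f x - f y) \<le> B * norm (x - y)"
proof (rule differentiable_bound[of UNIV f "\<lambda>x. blinfun_apply (D x)"])
  show "(f has_derivative blinfun_apply (D x)) (at x within UNIV)" for x using der by simp
  show "onorm (blinfun_apply (D x)) \<le> B" for x using B[of x] by (simp add: norm_blinfun.rep_eq)
qed auto



lemma bc_shift:
  fixes f :: "'a::real_normed_vector \<Rightarrow> 'b::real_normed_vector"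
  assumes "continuous_on UNIV f" "\<And>x. norm (f x) \<le> B"
  shows "bc (\<lambda>z. f (x - z))"
  unfolding bc_def
proof (intro conjI exI allI)
  have "continuous_on UNIV (f \<circ> (\<lambda>z. x - z))"
  proof (rule continuous_on_compose)
    show "continuous_on UNIV (\<lambda>z. x - z)" by (rule continuous_on_diff[OF continuous_on_const continuous_on_id])
    show "continuous_on ((\<lambda>z. x - z) ` UNIV) f" by (rule continuous_on_subset[OF assms(1)]) simp
  qed
  then show "continuous_on UNIV (\<lambda>z. f (x - z))" by (simp add: o_def)
  show "norm (f (x - z)) \<le> B" for z by (rule assms(2))
qed

lemma lip_shift:
  fixes f :: "'a::real_normed_vector \<Rightarrow> 'b::real_normed_vector"
  assumes "\<And>a b. norm (f a - f b) \<le> L * norm (a - b)"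
  shows "norm (f (x - z) - f (x - z')) \<le> L * norm (z - z')"
proof -
  have "(x - z) - (x - z') = - (z - z')" by simp
  then show ?thesis using assms[of "x - z" "x - z'"] by (simp only: norm_minus_cancel)
qed

lemma cardpos: "0 < real CARD('d::finite)" by (simp add: card_gt_0_iff)

lemma sup_norm_le: "(\<And>x. norm (f x) \<le> c) \<Longrightarrow> sup_norm f \<le> c"
  unfolding sup_norm_def by (rule cSUP_least) auto

lemma conv_eq: "conv K \<xi> x = Ap \<xi> (\<lambda>z. K (x - z))"
  by (simp add: conv_def Ap_def)

theorem lemma3p1:
  fixes K :: "real^'d::finite \<Rightarrow> real^'d^'d"
  assumes "UCb3 K"
  shows "\<exists>(DB :: 'd meas \<Rightarrow> real^'d \<Rightarrow> ((real^'d) \<Rightarrow>\<^sub>L (real^'d)))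
            (D2B :: 'd meas \<Rightarrow> real^'d \<Rightarrow> ((real^'d) \<Rightarrow>\<^sub>L ((real^'d) \<Rightarrow>\<^sub>L (real^'d)))).
           (\<forall>\<xi>. Cb2_derivs (conv K \<xi>) (DB \<xi>) (D2B \<xi>)) \<and>
           (\<forall>\<xi> \<epsilon>. \<epsilon> > 0 \<longrightarrow> (\<exists>\<delta>>0. \<forall>\<xi>'. weak_norm (\<xi> - \<xi>') < \<delta> \<longrightarrow>
               Cb2_norm (\<lambda>x. conv K \<xi> x - conv K \<xi>' x) (\<lambda>x. DB \<xi> x - DB \<xi>' x)
                        (\<lambda>x. D2B \<xi> x - D2B \<xi>' x) < \<epsilon>)) \<and>
           (\<exists>CB>0.
              (\<forall>\<xi>. Cb2_norm (conv K \<xi>) (DB \<xi>) (D2B \<xi>) \<le> CB * (weak_norm \<xi> + 1)) \<and>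
              (\<forall>\<xi> \<xi>'. sup_norm (\<lambda>x. conv K \<xi> x - conv K \<xi>' x) \<le> CB * weak_norm (\<xi> - \<xi>')) \<and>
              (\<forall>\<xi> \<xi>'. sup_norm (\<lambda>x. DB \<xi> x - DB \<xi>' x) \<le> CB * weak_norm (\<xi> - \<xi>')))"
proof -
  obtain D1 :: "real^'d \<Rightarrow> ((real^'d) \<Rightarrow>\<^sub>L (real^'d^'d))"
    and D2 :: "real^'d \<Rightarrow> ((real^'d) \<Rightarrow>\<^sub>L ((real^'d) \<Rightarrow>\<^sub>L (real^'d^'d)))"
    and D3 :: "real^'d \<Rightarrow> ((real^'d) \<Rightarrow>\<^sub>L ((real^'d) \<Rightarrow>\<^sub>L ((real^'d) \<Rightarrow>\<^sub>L (real^'d^'d))))"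
    where d1: "\<And>x. (K has_derivative blinfun_apply (D1 x)) (at x)"
      and d2: "\<And>x. (D1 has_derivative blinfun_apply (D2 x)) (at x)"
      and d3: "\<And>x. (D2 has_derivative blinfun_apply (D3 x)) (at x)"
      and bK: "bounded (range K)" and b1: "bounded (range D1)" and b2: "bounded (range D2)"
      and b3: "bounded (range D3)"
      and u1: "uniformly_continuous_on UNIV D1" and u2: "uniformly_continuous_on UNIV D2"
    using assms unfolding UCb3_def by blast
  obtain B0 where B0: "\<And>x. norm (K x) \<le> B0" "B0 > 0" using bK unfolding bounded_pos by auto
  obtain B1 where B1: "\<And>x. norm (D1 x) \<le> B1" "B1 > 0" using b1 unfolding bounded_pos by auto
  obtain B2 where B2: "\<And>x. norm (D2 x) \<le> B2" "B2 > 0" using b2 unfolding bounded_pos by auto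
  obtain B3 where B3: "\<And>x. norm (D3 x) \<le> B3" "B3 > 0" using b3 unfolding bounded_pos by auto
  have cK: "continuous_on UNIV K"
    by (rule continuous_at_imp_continuous_on) (metis d1 has_derivative_continuous)
  have c1: "continuous_on UNIV D1"
    by (rule continuous_at_imp_continuous_on) (metis d2 has_derivative_continuous)
  have c2: "continuous_on UNIV D2"
    by (rule continuous_at_imp_continuous_on) (metis d3 has_derivative_continuous)
  have lK: "norm (K a - K b) \<le> B1 * norm (a - b)" for a b by (rule lip_from_deriv[OF d1 B1(1)])
  have l1: "norm (D1 a - D1 b) \<le> B2 * norm (a - b)" for a b by (rule lip_from_deriv[OF d2 B2(1)])
  have l2: "norm (D2 a - D2 b) \<le> B3 * norm (a - b)" for a b by (rule lip_from_deriv[OF d3 B3(1)])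
  have bcK: "bc (\<lambda>z. K (x - z))" for x by (rule bc_shift[OF cK B0(1)])
  have bc1: "bc (\<lambda>z. D1 (x - z))" for x by (rule bc_shift[OF c1 B1(1)])
  have bc2: "bc (\<lambda>z. D2 (x - z))" for x by (rule bc_shift[OF c2 B2(1)])

  define DB where "DB = (\<lambda>(\<xi>::'d meas) x. AL \<xi> (\<lambda>z. D1 (x - z)))"
  define D2B where "D2B = (\<lambda>(\<xi>::'d meas) x. AL2 \<xi> (\<lambda>z. D2 (x - z)))"

  have F1: "(conv K \<xi> has_derivative blinfun_apply (DB \<xi> x)) (at x)" for \<xi> x
    unfolding has_derivative_at_alt
  proof (intro conjI blinfun.bounded_linear_right allI impI)
    fix e :: real assume e: "e > 0"
    define c where "c = real CARD('d) * (norm \<xi> + 1)"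
    have c0: "c > 0" unfolding c_def by (rule mult_pos_pos[OF cardpos]) (simp add: add_nonneg_pos)
    obtain d where d: "d > 0" and dd: "\<And>w h. norm h < d \<Longrightarrow> norm (K (w + h) - K w - D1 w h) \<le> (e / c) * norm h"
      using unif_lin[OF d1 u1, of "e / c"] e c0 by auto
    show "\<exists>d>0. \<forall>y. norm (y - x) < d \<longrightarrow> norm (conv K \<xi> y - conv K \<xi> x - blinfun_apply (DB \<xi> x) (y - x)) \<le> e * norm (y - x)"
    proof (intro exI[of _ d] conjI d allI impI)
      fix y assume y: "norm (y - x) < d"
      have bcA: "bc (\<lambda>z. K (y - z) - K (x - z))" by (intro bc_diff bcK)
      have bcB: "bc (\<lambda>z. D1 (x - z) (y - x))" by (intro bc_app bc1)
      have eq: "conv K \<xi> y - conv K \<xi> x - blinfun_apply (DB \<xi> x) (y - x)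
          = Ap \<xi> (\<lambda>z. K (y - z) - K (x - z) - D1 (x - z) (y - x))"
        by (simp add: conv_eq DB_def AL_apply[OF bc1] Ap_diff[OF bcA bcB] Ap_diff[OF bcK bcK])
      have pt: "norm (K (y - z) - K (x - z) - D1 (x - z) (y - x)) \<le> (e / c) * norm (y - x)" for z
        using dd[OF y, of "x - z"] by (simp add: algebra_simps)
      have "norm (Ap \<xi> (\<lambda>z. K (y - z) - K (x - z) - D1 (x - z) (y - x)))
           \<le> real CARD('d) * (norm \<xi> * ((e / c) * norm (y - x)))"
        by (rule Ap_norm[OF bc_diff[OF bcA bcB] pt])
      also have "\<dots> \<le> real CARD('d) * ((norm \<xi> + 1) * ((e / c) * norm (y - x)))"
        using e c0 by (intro mult_left_mono mult_right_mono) auto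
      also have "\<dots> = e * norm (y - x)" using c0 unfolding c_def by (simp add: field_simps)
      finally show "norm (conv K \<xi> y - conv K \<xi> x - blinfun_apply (DB \<xi> x) (y - x)) \<le> e * norm (y - x)"
        using eq by simp
    qed
  qed

  have F2: "(DB \<xi> has_derivative blinfun_apply (D2B \<xi> x)) (at x)" for \<xi> x
    unfolding has_derivative_at_alt
  proof (intro conjI blinfun.bounded_linear_right allI impI)
    fix e :: real assume e: "e > 0"
    define c where "c = real CARD('d) * (norm \<xi> + 1)"
    have c0: "c > 0" unfolding c_def by (rule mult_pos_pos[OF cardpos]) (simp add: add_nonneg_pos)
    obtain d where d: "d > 0" and dd: "\<And>w h. norm h < d \<Longrightarrow> norm (D1 (w + h) - D1 w - D2 w h) \<le> (e / c) * norm h"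
      using unif_lin[OF d2 u2, of "e / c"] e c0 by auto
    show "\<exists>d>0. \<forall>y. norm (y - x) < d \<longrightarrow> norm (DB \<xi> y - DB \<xi> x - blinfun_apply (D2B \<xi> x) (y - x)) \<le> e * norm (y - x)"
    proof (intro exI[of _ d] conjI d allI impI)
      fix y assume y: "norm (y - x) < d"
      have bcA: "bc (\<lambda>z. D1 (y - z) - D1 (x - z))" by (intro bc_diff bc1)
      have bcB: "bc (\<lambda>z. D2 (x - z) (y - x))" by (intro bc_app bc2)
      have eq: "DB \<xi> y - DB \<xi> x - blinfun_apply (D2B \<xi> x) (y - x)
          = AL \<xi> (\<lambda>z. D1 (y - z) - D1 (x - z) - D2 (x - z) (y - x))"
        by (simp add: DB_def D2B_def AL2_apply[OF bc2] AL_diff[OF bcA bcB] AL_diff[OF bc1 bc1])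
      have pt: "norm (D1 (y - z) - D1 (x - z) - D2 (x - z) (y - x)) \<le> (e / c) * norm (y - x)" for z
        using dd[OF y, of "x - z"] by (simp add: algebra_simps)
      have "norm (AL \<xi> (\<lambda>z. D1 (y - z) - D1 (x - z) - D2 (x - z) (y - x)))
           \<le> real CARD('d) * (norm \<xi> * ((e / c) * norm (y - x)))"
        by (rule AL_norm[OF bc_diff[OF bcA bcB] pt])
      also have "\<dots> \<le> real CARD('d) * ((norm \<xi> + 1) * ((e / c) * norm (y - x)))"
        using e c0 by (intro mult_left_mono mult_right_mono) auto
      also have "\<dots> = e * norm (y - x)" using c0 unfolding c_def by (simp add: field_simps)
      finally show "norm (DB \<xi> y - DB \<xi> x - blinfun_apply (D2B \<xi> x) (y - x)) \<le> e * norm (y - x)"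
        using eq by simp
    qed
  qed

  have F3: "continuous_on UNIV (D2B \<xi>)" for \<xi>
  proof (rule lipschitz_on_continuous_on)
    show "lipschitz_on (real CARD('d) * (norm \<xi> * B3)) UNIV (D2B \<xi>)"
      unfolding lipschitz_on_def
    proof (intro conjI ballI)
      show "0 \<le> real CARD('d) * (norm \<xi> * B3)" using B3 by simp
      fix x y :: "real^'d"
      have "D2B \<xi> x - D2B \<xi> y = AL2 \<xi> (\<lambda>z. D2 (x - z) - D2 (y - z))"
        by (simp add: D2B_def AL2_diff[OF bc2 bc2])
      also have "norm \<dots> \<le> real CARD('d) * (norm \<xi> * (B3 * norm (x - y)))"
      proof (rule AL2_norm[OF bc_diff[OF bc2 bc2]])
        fix z
        have "(x - z) - (y - z) = x - y" by simp
        then show "norm (D2 (x - z) - D2 (y - z)) \<le> B3 * norm (x - y)" using l2[of "x - z" "y - z"] by simp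
      qed
      finally show "dist (D2B \<xi> x) (D2B \<xi> y) \<le> real CARD('d) * (norm \<xi> * B3) * dist x y"
        by (simp add: dist_norm algebra_simps)
    qed
  qed

  have nK: "norm (conv K \<xi> x) \<le> real CARD('d) * (norm \<xi> * B0)" for \<xi> x
    unfolding conv_eq by (rule Ap_norm[OF bcK B0(1)])
  have n1: "norm (DB \<xi> x) \<le> real CARD('d) * (norm \<xi> * B1)" for \<xi> x
    unfolding DB_def by (rule AL_norm[OF bc1 B1(1)])
  have n2: "norm (D2B \<xi> x) \<le> real CARD('d) * (norm \<xi> * B2)" for \<xi> x
    unfolding D2B_def by (rule AL2_norm[OF bc2 B2(1)])

  have Cb2: "Cb2_derivs (conv K \<xi>) (DB \<xi>) (D2B \<xi>)" for \<xi>
    unfolding Cb2_derivs_def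
    by (intro conjI allI F1 F2 F3 boundedI) (auto intro: nK n1 n2)

  have wK: "norm (conv K \<xi> x) \<le> real CARD('d) * ((B0 + B1) * weak_norm \<xi>)" for \<xi> x
    unfolding conv_eq by (rule Ap_weak[OF bcK B0(1) lip_shift[OF lK]]) (use B1 in simp)
  have w1: "norm (DB \<xi> x) \<le> real CARD('d) * ((B1 + B2) * weak_norm \<xi>)" for \<xi> x
    unfolding DB_def by (rule AL_weak[OF bc1 B1(1) lip_shift[OF l1]]) (use B2 in simp)
  have w2: "norm (D2B \<xi> x) \<le> real CARD('d) * ((B2 + B3) * weak_norm \<xi>)" for \<xi> x
    unfolding D2B_def by (rule AL2_weak[OF bc2 B2(1) lip_shift[OF l2]]) (use B3 in simp)

  define S where "S = real CARD('d) * (B0 + 2 * B1 + 2 * B2 + B3)"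
  have S0: "S \<ge> 0" unfolding S_def using B0 B1 B2 B3 by simp

  have dK: "(\<lambda>x. conv K \<xi> x - conv K \<xi>' x) = conv K (\<xi> - \<xi>')" for \<xi> \<xi>'
    by (rule ext) (simp add: conv_eq Ap_xi_diff)
  have dB: "(\<lambda>x. DB \<xi> x - DB \<xi>' x) = DB (\<xi> - \<xi>')" for \<xi> \<xi>'
    by (rule ext) (simp add: DB_def AL_xi_diff[OF bc1])
  have dB2: "(\<lambda>x. D2B \<xi> x - D2B \<xi>' x) = D2B (\<xi> - \<xi>')" for \<xi> \<xi>'
    by (rule ext) (simp add: D2B_def AL2_xi_diff[OF bc2])

  have sK: "sup_norm (conv K \<eta>) \<le> S * weak_norm \<eta>" for \<eta>
  proof (rule sup_norm_le)
    fix x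
    have "real CARD('d) * ((B0 + B1) * weak_norm \<eta>) \<le> S * weak_norm \<eta>"
      unfolding S_def using B0 B1 B2 B3 wn_nonneg[of \<eta>]
      by (simp add: mult_right_mono mult.assoc[symmetric] mult_left_mono)
    then show "norm (conv K \<eta> x) \<le> S * weak_norm \<eta>" using wK[of \<eta> x] by linarith
  qed
  have s1: "sup_norm (DB \<eta>) \<le> S * weak_norm \<eta>" for \<eta>
  proof (rule sup_norm_le)
    fix x
    have "real CARD('d) * ((B1 + B2) * weak_norm \<eta>) \<le> S * weak_norm \<eta>"
      unfolding S_def using B0 B1 B2 B3 wn_nonneg[of \<eta>]
      by (simp add: mult_right_mono mult.assoc[symmetric] mult_left_mono)
    then show "norm (DB \<eta> x) \<le> S * weak_norm \<eta>" using w1[of \<eta> x] by linarith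
  qed
  have all: "Cb2_norm (conv K \<eta>) (DB \<eta>) (D2B \<eta>) \<le> S * weak_norm \<eta>" for \<eta>
  proof -
    have a: "sup_norm (conv K \<eta>) \<le> real CARD('d) * ((B0 + B1) * weak_norm \<eta>)"
      by (rule sup_norm_le) (rule wK)
    have b: "sup_norm (DB \<eta>) \<le> real CARD('d) * ((B1 + B2) * weak_norm \<eta>)"
      by (rule sup_norm_le) (rule w1)
    have c: "sup_norm (D2B \<eta>) \<le> real CARD('d) * ((B2 + B3) * weak_norm \<eta>)"
      by (rule sup_norm_le) (rule w2)
    have "real CARD('d) * ((B0 + B1) * weak_norm \<eta>) + real CARD('d) * ((B1 + B2) * weak_norm \<eta>)
          + real CARD('d) * ((B2 + B3) * weak_norm \<eta>) = S * weak_norm \<eta>"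
      unfolding S_def by (simp add: algebra_simps)
    then show ?thesis unfolding Cb2_norm_def using a b c by linarith
  qed

  show ?thesis
  proof (rule exI[of _ DB], rule exI[of _ D2B], intro conjI allI impI)
    show "Cb2_derivs (conv K \<xi>) (DB \<xi>) (D2B \<xi>)" for \<xi> by (rule Cb2)
  next
    fix \<xi> :: "'d meas" and \<epsilon> :: real assume e: "\<epsilon> > 0"
    show "\<exists>\<delta>>0. \<forall>\<xi>'. weak_norm (\<xi> - \<xi>') < \<delta> \<longrightarrow>
               Cb2_norm (\<lambda>x. conv K \<xi> x - conv K \<xi>' x) (\<lambda>x. DB \<xi> x - DB \<xi>' x)
                        (\<lambda>x. D2B \<xi> x - D2B \<xi>' x) < \<epsilon>"
    proof (intro exI[of _ "\<epsilon> / (S + 1)"] conjI allI impI)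
      show "\<epsilon> / (S + 1) > 0" using e S0 by simp
      fix \<xi>' assume w: "weak_norm (\<xi> - \<xi>') < \<epsilon> / (S + 1)"
      have "Cb2_norm (\<lambda>x. conv K \<xi> x - conv K \<xi>' x) (\<lambda>x. DB \<xi> x - DB \<xi>' x) (\<lambda>x. D2B \<xi> x - D2B \<xi>' x)
            \<le> S * weak_norm (\<xi> - \<xi>')" unfolding dK dB dB2 by (rule all)
      also have "\<dots> \<le> (S + 1) * weak_norm (\<xi> - \<xi>')" using wn_nonneg[of "\<xi> - \<xi>'"] by (simp add: algebra_simps)
      also have "\<dots> < (S + 1) * (\<epsilon> / (S + 1))" using w S0 by (intro mult_strict_left_mono) auto
      also have "\<dots> = \<epsilon>" using S0 by simp
      finally show "Cb2_norm (\<lambda>x. conv K \<xi> x - conv K \<xi>' x) (\<lambda>x. DB \<xi> x - DB \<xi>' x) (\<lambda>x. D2B \<xi> x - D2B \<xi>' x) < \<epsilon>" .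
    qed
  next
    show "\<exists>CB>0. (\<forall>\<xi>. Cb2_norm (conv K \<xi>) (DB \<xi>) (D2B \<xi>) \<le> CB * (weak_norm \<xi> + 1)) \<and>
              (\<forall>\<xi> \<xi>'. sup_norm (\<lambda>x. conv K \<xi> x - conv K \<xi>' x) \<le> CB * weak_norm (\<xi> - \<xi>')) \<and>
              (\<forall>\<xi> \<xi>'. sup_norm (\<lambda>x. DB \<xi> x - DB \<xi>' x) \<le> CB * weak_norm (\<xi> - \<xi>'))"
    proof (intro exI[of _ "S + 1"] conjI allI)
      show "S + 1 > 0" using S0 by simp
      fix \<xi> :: "'d meas"
      have "S * weak_norm \<xi> \<le> (S + 1) * (weak_norm \<xi> + 1)"
        using S0 wn_nonneg[of \<xi>] by (simp add: algebra_simps)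
      then show "Cb2_norm (conv K \<xi>) (DB \<xi>) (D2B \<xi>) \<le> (S + 1) * (weak_norm \<xi> + 1)"
        using all[of \<xi>] by linarith
    next
      fix \<xi> \<xi>' :: "'d meas"
      have "S * weak_norm (\<xi> - \<xi>') \<le> (S + 1) * weak_norm (\<xi> - \<xi>')"
        using wn_nonneg[of "\<xi> - \<xi>'"] by (simp add: algebra_simps)
      then show "sup_norm (\<lambda>x. conv K \<xi> x - conv K \<xi>' x) \<le> (S + 1) * weak_norm (\<xi> - \<xi>')"
        unfolding dK using sK[of "\<xi> - \<xi>'"] by linarith
    next
      fix \<xi> \<xi>' :: "'d meas"
      have "S * weak_norm (\<xi> - \<xi>') \<le> (S + 1) * weak_norm (\<xi> - \<xi>')"
        using wn_nonneg[of "\<xi> - \<xi>'"] by (simp add: algebra_simps)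
      then show "sup_norm (\<lambda>x. DB \<xi> x - DB \<xi>' x) \<le> (S + 1) * weak_norm (\<xi> - \<xi>')"
        unfolding dB using s1[of "\<xi> - \<xi>'"] by linarith
    qed
  qed
qed

end
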